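(* Let $$D_{10}=\begin{bmatrix} 1 & 1 & 1 & 1 & 1 & 1 & 1 & 1 & 1 & 1 \\ 1 & -1 & -\mathrm{i} & -\mathrm{i} & -\mathrm{i} & -\mathrm{i} & \mathrm{i} & \mathrm{i} & \mathrm{i} & \mathrm{i} \\ 1 & -\mathrm{i} & -1 & \mathrm{i} & \mathrm{i} & -\mathrm{i} & -\mathrm{i} & -\mathrm{i} & \mathrm{i} & \mathrm{i} \\ 1 & -\mathrm{i} & \mathrm{i} & -1 & -\mathrm{i} & \mathrm{i} & -\mathrm{i} & \mathrm{i} & -\mathrm{i} & \mathrm{i} \\ 1 & -\mathrm{i} & \mathrm{i} & -\mathrm{i} & -1 & \mathrm{i} & \mathrm{i} & -\mathrm{i} & \mathrm{i} & -\mathrm{i} \\ 1 & -\mathrm{i} & -\mathrm{i} & \mathrm{i} & \mathrm{i} & -1 & \mathrm{i} & \mathrm{i} & -\mathrm{i} & -\mathrm{i} \\ 1 & \mathrm{i} & -\mathrm{i} & -\mathrm{i} & \mathrm{i} & \mathrm{i} & -1 & -\mathrm{i} & -\mathrm{i} & \mathrm{i} \\ 1 & \mathrm{i} & -\mathrm{i} & \mathrm{i} & -\mathrm{i} & \mathrm{i} & -\mathrm{i} & -1 & \mathrm{i} & -\mathrm{i} \\ 1 & \mathrm{i} & \mathrm{i} & -\mathrm{i} & \mathrm{i} & -\mathrm{i} & -\mathrm{i} & \mathrm{i} & -1 & -\mathrm{i} \\ 1 & \mathrm{i} & \mathrm{i} & \mathrm{i} & -\mathrm{i} & -\mathrm{i}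 & \mathrm{i} & -\mathrm{i} & -\mathrm{i} & -1 \end{bmatrix}.$$ Define real $10\times10$ matrices $V_4,V_{15},V_{16}$ (rows and columns indexed $1,\ldots,10$), all of whose entries are $0$ except: $V_4$ has entry $+1$ at positions $(2,5),(2,9),(4,7),(4,8),(6,5),(6,9),(10,7),(10,8)$ and entry $-1$ at positions $(5,2),(5,6),(7,4),(7,10),(8,4),(8,10),(9,2),(9,6)$; $V_{15}$ has entry $+1$ at positions $(4,2),(4,6),(5,2),(5,6),(9,2),(9,6),(10,2),(10,6)$ and entry $-1$ at positions $(2,4),(2,5),(2,9),(2,10),(6,4),(6,5),(6,9),(6,10)$; $V_{16}$ has entry $+1$ at positions $(4,2),(4,6),(7,5),(7,9),(8,5),(8,9),(10,2),(10,6)$ and entry $-1$ at positions $(2,4),(2,10),(5,7),(5,8),(6,4),(6,10),(9,7),(9,8)$. Then for all $a,b,c\in\mathbb{R}$, the matrix $D_{10}\circ\mathrm{EXP}\big(\mathrm{i}(aV_4+bV_{15}+cV_{16})\big)$ is a dephased complex Hadamard matrix.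
   Context: $\circ$ denotes the entrywise (Hadamard) product and $[\mathrm{EXP}(\mathrm{i}R)]_{j,k}=e^{\mathrm{i}[R]_{j,k}}$ for a real matrix $R$. A dephased complex Hadamard matrix of order $d$ is a $d\times d$ matrix with unimodular entries, first row and first column all equal to $1$, and $HH^*=dI_d$, where $^*$ is conjugate transpose. *)

theory Defs
  imports Complex_Main
begin

text \<open>Square matrices of order d are represented as functions nat => nat => 'a,
  with rows and columns indexed by 1..d (entries outside this range are irrelevant).\<close>

definition dephased_complex_hadamard :: "nat \<Rightarrow> (nat \<Rightarrow> nat \<Rightarrow> complex) \<Rightarrow> bool" where
  "dephased_complex_hadamard d H \<longleftrightarrow>
     (\<forall>j\<in>{1..d}. \<forall>k\<in>{1..d}. cmod (H j k) = 1) \<and>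
     (\<forall>k\<in>{1..d}. H 1 k = 1) \<and>
     (\<forall>j\<in>{1..d}. H j 1 = 1) \<and>
     (\<forall>j\<in>{1..d}. \<forall>k\<in>{1..d}.
        (\<Sum>l=1..d. H j l * cnj (H k l)) = (if j = k then of_nat d else 0))"

definition hadamard_prod :: "(nat \<Rightarrow> nat \<Rightarrow> complex) \<Rightarrow> (nat \<Rightarrow> nat \<Rightarrow> complex) \<Rightarrow> nat \<Rightarrow> nat \<Rightarrow> complex" where
  "hadamard_prod A B = (\<lambda>j k. A j k * B j k)"

definition EXPi :: "(nat \<Rightarrow> nat \<Rightarrow> real) \<Rightarrow> nat \<Rightarrow> nat \<Rightarrow> complex" where
  "EXPi R = (\<lambda>j k. exp (\<i> * complex_of_real (R j k)))"

definition list_mat :: "'a list list \<Rightarrow> nat \<Rightarrow> nat \<Rightarrow> 'a" where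
  "list_mat L = (\<lambda>j k. L ! (j - 1) ! (k - 1))"

definition D10 :: "nat \<Rightarrow> nat \<Rightarrow> complex" where
  "D10 = list_mat
    [[1,  1,  1,  1,  1,  1,  1,  1,  1,  1],
     [1, -1, -\<i>, -\<i>, -\<i>, -\<i>,  \<i>,  \<i>,  \<i>,  \<i>],
     [1, -\<i>, -1,  \<i>,  \<i>, -\<i>, -\<i>, -\<i>,  \<i>,  \<i>],
     [1, -\<i>,  \<i>, -1, -\<i>,  \<i>, -\<i>,  \<i>, -\<i>,  \<i>],
     [1, -\<i>,  \<i>, -\<i>, -1,  \<i>,  \<i>, -\<i>,  \<i>, -\<i>],
     [1, -\<i>, -\<i>,  \<i>,  \<i>, -1,  \<i>,  \<i>, -\<i>, -\<i>],
     [1,  \<i>, -\<i>, -\<i>,  \<i>,  \<i>, -1, -\<i>, -\<i>,  \<i>],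
     [1,  \<i>, -\<i>,  \<i>, -\<i>,  \<i>, -\<i>, -1,  \<i>, -\<i>],
     [1,  \<i>,  \<i>, -\<i>,  \<i>, -\<i>, -\<i>,  \<i>, -1, -\<i>],
     [1,  \<i>,  \<i>,  \<i>, -\<i>, -\<i>,  \<i>, -\<i>, -\<i>, -1]]"

definition pm_mat :: "(nat \<times> nat) list \<Rightarrow> (nat \<times> nat) list \<Rightarrow> nat \<Rightarrow> nat \<Rightarrow> real" where
  "pm_mat P N = (\<lambda>j k. if (j, k) \<in> set P then 1 else if (j, k) \<in> set N then -1 else 0)"

definition V4 :: "nat \<Rightarrow> nat \<Rightarrow> real" where
  "V4 = pm_mat [(2,5),(2,9),(4,7),(4,8),(6,5),(6,9),(10,7),(10,8)]
               [(5,2),(5,6),(7,4),(7,10),(8,4),(8,10),(9,2),(9,6)]"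

definition V15 :: "nat \<Rightarrow> nat \<Rightarrow> real" where
  "V15 = pm_mat [(4,2),(4,6),(5,2),(5,6),(9,2),(9,6),(10,2),(10,6)]
                [(2,4),(2,5),(2,9),(2,10),(6,4),(6,5),(6,9),(6,10)]"

definition V16 :: "nat \<Rightarrow> nat \<Rightarrow> real" where
  "V16 = pm_mat [(4,2),(4,6),(7,5),(7,9),(8,5),(8,9),(10,2),(10,6)]
                [(2,4),(2,10),(5,7),(5,8),(6,4),(6,10),(9,7),(9,8)]"

end

theory Submission imports Defs begin

definition EE :: "real \<Rightarrow> real \<Rightarrow> real \<Rightarrow> real \<Rightarrow> real \<Rightarrow> real \<Rightarrow> complex" where
  "EE a b c p q r = cis (a*p+b*q+c*r)"

lemma EE_mult: "EE a b c p q r * EE a b c p' q' r' = EE a b c (p+p') (q+q') (r+r')"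
  unfolding EE_def by (simp add: cis_mult algebra_simps)
lemma EE_cnj: "cnj (EE a b c p q r) = EE a b c (-p) (-q) (-r)"
  unfolding EE_def by (simp add: cis_cnj)
lemma EE_0: "EE a b c 0 0 0 = 1" unfolding EE_def by simp
lemma EE_mod: "cmod (EE a b c p q r) = 1" unfolding EE_def by simp

lemma ent: "hadamard_prod D10 (EXPi (\<lambda>j k. a * V4 j k + b * V15 j k + c * V16 j k)) j k
   = D10 j k * EE a b c (V4 j k) (V15 j k) (V16 j k)"
  unfolding hadamard_prod_def EXPi_def EE_def by (simp add: cis_conv_exp)

lemma sum10: "(\<Sum>l=1..10. f (l::nat)) = f 1 + f 2 + f 3 + f 4 + f 5 + f 6 + f 7 + f 8 + f 9 + (f 10 :: complex)"
  by (simp add: eval_nat_numeral atLeastAtMostSuc_conv algebra_simps)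

lemma orth: assumes "j \<in> {1..10}" "k \<in> {1..10}" shows
 "(\<Sum>l=1..10. D10 j l * EE a b c (V4 j l) (V15 j l) (V16 j l) * cnj (D10 k l * EE a b c (V4 k l) (V15 k l) (V16 k l))) = (if j = k then 10 else 0)"
proof -
  have r: "\<And>x::nat. x \<in> {1..10} \<longleftrightarrow> x=1 \<or> x=2 \<or> x=3 \<or> x=4 \<or> x=5 \<or> x=6 \<or> x=7 \<or> x=8 \<or> x=9 \<or> x=10" by (simp, arith)
  show ?thesis using assms unfolding r sum10
  apply (elim disjE)
  apply (simp_all add: D10_def list_mat_def V4_def V15_def V16_def pm_mat_def EE_cnj EE_mult EE_0 algebra_simps)
  done
qed

theorem mainTheorem5:
  fixes a b c :: real
  shows "dephased_complex_hadamard 10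
           (hadamard_prod D10 (EXPi (\<lambda>j k. a * V4 j k + b * V15 j k + c * V16 j k)))"
proof -
  have r: "\<And>x::nat. x \<in> {1..10} \<longleftrightarrow> x=1 \<or> x=2 \<or> x=3 \<or> x=4 \<or> x=5 \<or> x=6 \<or> x=7 \<or> x=8 \<or> x=9 \<or> x=10" by (simp, arith)
  have m: "\<forall>j\<in>{1..10}. \<forall>k\<in>{1..10}. cmod (D10 j k) = 1"
    apply (intro ballI) unfolding r by (elim disjE; simp add: D10_def list_mat_def)
  have row: "\<forall>k\<in>{1..10}. D10 1 k * EE a b c (V4 1 k) (V15 1 k) (V16 1 k) = 1"
    apply (intro ballI) unfolding r by (elim disjE; simp add: D10_def list_mat_def V4_def V15_def V16_def pm_mat_def EE_0)
  have col: "\<forall>j\<in>{1..10}. D10 j 1 * EE a b c (V4 j 1) (V15 j 1) (V16 j 1) = 1"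
    apply (intro ballI) unfolding r by (elim disjE; simp add: D10_def list_mat_def V4_def V15_def V16_def pm_mat_def EE_0)
  show ?thesis
    unfolding dephased_complex_hadamard_def ent
    using m row col orth by (simp add: norm_mult EE_mod)
qed

end
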